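(* Let $\gamma$ be a cocycle. Then (i) $|\gamma^{dom}(\lambda)|\ge1$ for every $\lambda\in\Lambda$; (ii) $|\gamma^{dom}(\lambda\mu)|\le|\gamma^{dom}(\lambda)|\,|\gamma^{dom}(\mu)|$ for all $\lambda,\mu\in\Lambda$.
   Context: $L$ is a finite extension of $\mathbb{Q}_p$, $K$ a complete extension field of $\mathbb{Q}_p$ containing $L$ with absolute value $|\ |$; $|\ |_L$ normalized absolute value of $L$. $G$ is the $L$-points of an $L$-split connected reductive group, $T$ a maximal $L$-split torus, $P$ a Borel subgroup containing $T$, $W=N(T)/T$, $U_0$ a maximal compact subgroup special with respect to $T$, $\Lambda=T/(U_0\cap T)$ (written multiplicatively), $\lambda:T\to\Lambda$ the projection, $W$ acting on $\Lambda$ by conjugation (${}^w\lambda$). $T^{--}=\{t:|\alpha(t)|_L\ge1$ for all roots $\alpha$ positive for $P\}$, $\Lambda^{--}=\lambda(T^{--})$. A cocycle is $\gamma:W\times\Lambda\to K^\times$ with (a) $\gamma(w,\lambda\mu)=\gamma(w,\lambda)\gamma(w,\mu)$; (b) $\gamma(vw,\lambda)=\gamma(v,{}^w\lambda)\gamma(w,\lambda)$; (c) $|\gamma(w,\lambda)|\le1$ for $\lambda\in\Lambda^{--}$; (d) $\gamma(w,\lambda)=1$ if ${}^w\lambda=\lambda$. $\gamma^{dom}(\lambda):=\gamma(w,\lambda)$ for any $w\in W$ with ${}^w\lambda\in\Lambda^{--}$ (well defined by (d)). *)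

theory Defs
  imports Complex_Main "HOL-Algebra.Group"
begin

text \<open>W : the (finite) Weyl group, as a HOL-Algebra group.
  Lam : the abelian group Lambda = T/(U0 cap T), written multiplicatively.
  act w l : the conjugation action of w on l (written  ^w l  in the paper).
  Ldd : the subset Lambda^{--} = lambda(T^{--}).
  absv : the absolute value of the field K (values of gamma lie in K^x).\<close>

text \<open>Properties of (W, Lambda, action, Lambda^{--}) coming from the structure
  theory of split reductive groups: W is a finite group acting on the abelian group
  Lambda by group automorphisms, Lambda^{--} is a submonoid, every W-orbit meets
  Lambda^{--}, and it meets it in exactly one point.\<close>
definition weyl_datum ::
  "('w, 'a) monoid_scheme \<Rightarrow> ('l, 'b) monoid_scheme \<Rightarrow> ('w \<Rightarrow> 'l \<Rightarrow> 'l) \<Rightarrow> 'l set \<Rightarrow> bool"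
where
  "weyl_datum W Lam act Ldd \<longleftrightarrow>
     group W \<and> finite (carrier W) \<and> comm_group Lam \<and>
     (\<forall>w\<in>carrier W. \<forall>l\<in>carrier Lam. act w l \<in> carrier Lam) \<and>
     (\<forall>l\<in>carrier Lam. act \<one>\<^bsub>W\<^esub> l = l) \<and>
     (\<forall>v\<in>carrier W. \<forall>w\<in>carrier W. \<forall>l\<in>carrier Lam.
         act (v \<otimes>\<^bsub>W\<^esub> w) l = act v (act w l)) \<and>
     (\<forall>w\<in>carrier W. \<forall>l\<in>carrier Lam. \<forall>m\<in>carrier Lam.
         act w (l \<otimes>\<^bsub>Lam\<^esub> m) = act w l \<otimes>\<^bsub>Lam\<^esub> act w m) \<and>
     Ldd \<subseteq> carrier Lam \<and> \<one>\<^bsub>Lam\<^esub> \<in> Ldd \<and>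
     (\<forall>l\<in>Ldd. \<forall>m\<in>Ldd. l \<otimes>\<^bsub>Lam\<^esub> m \<in> Ldd) \<and>
     (\<forall>l\<in>carrier Lam. \<exists>w\<in>carrier W. act w l \<in> Ldd) \<and>
     (\<forall>l\<in>carrier Lam. \<forall>v\<in>carrier W. \<forall>w\<in>carrier W.
         act v l \<in> Ldd \<longrightarrow> act w l \<in> Ldd \<longrightarrow> act v l = act w l)"

text \<open>An absolute value on the field K (non-archimedean, as K is a complete
  extension of Q_p).\<close>
definition absolute_value :: "('k::field \<Rightarrow> real) \<Rightarrow> bool" where
  "absolute_value absv \<longleftrightarrow>
     (\<forall>x. 0 \<le> absv x) \<and> (\<forall>x. absv x = 0 \<longleftrightarrow> x = 0) \<and>
     (\<forall>x y. absv (x * y) = absv x * absv y) \<and>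
     (\<forall>x y. absv (x + y) \<le> max (absv x) (absv y))"

definition cocycle ::
  "('w, 'a) monoid_scheme \<Rightarrow> ('l, 'b) monoid_scheme \<Rightarrow> ('w \<Rightarrow> 'l \<Rightarrow> 'l) \<Rightarrow> 'l set \<Rightarrow>
   ('k::field \<Rightarrow> real) \<Rightarrow> ('w \<Rightarrow> 'l \<Rightarrow> 'k) \<Rightarrow> bool"
where
  "cocycle W Lam act Ldd absv \<gamma> \<longleftrightarrow>
     (\<forall>w\<in>carrier W. \<forall>l\<in>carrier Lam. \<gamma> w l \<noteq> 0) \<and>
     (\<forall>w\<in>carrier W. \<forall>l\<in>carrier Lam. \<forall>m\<in>carrier Lam.
         \<gamma> w (l \<otimes>\<^bsub>Lam\<^esub> m) = \<gamma> w l * \<gamma> w m) \<and>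
     (\<forall>v\<in>carrier W. \<forall>w\<in>carrier W. \<forall>l\<in>carrier Lam.
         \<gamma> (v \<otimes>\<^bsub>W\<^esub> w) l = \<gamma> v (act w l) * \<gamma> w l) \<and>
     (\<forall>w\<in>carrier W. \<forall>l\<in>Ldd. absv (\<gamma> w l) \<le> 1) \<and>
     (\<forall>w\<in>carrier W. \<forall>l\<in>carrier Lam. act w l = l \<longrightarrow> \<gamma> w l = 1)"

definition gamma_dom ::
  "('w, 'a) monoid_scheme \<Rightarrow> ('w \<Rightarrow> 'l \<Rightarrow> 'l) \<Rightarrow> 'l set \<Rightarrow> ('w \<Rightarrow> 'l \<Rightarrow> 'k) \<Rightarrow> 'l \<Rightarrow> 'k"
where
  "gamma_dom W act Ldd \<gamma> l = \<gamma> (SOME w. w \<in> carrier W \<and> act w l \<in> Ldd) l"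

end

theory Submission
  imports Defs
begin

lemma key_ge1:
  assumes wd: "weyl_datum W Lam act Ldd" and av: "absolute_value absv"
    and cc: "cocycle W Lam act Ldd absv \<gamma>"
    and x: "x \<in> carrier W" and n: "n \<in> carrier Lam" and d: "act x n \<in> Ldd"
  shows "absv (\<gamma> x n) \<ge> 1"
proof -
  have G: "group W" using wd unfolding weyl_datum_def by blast
  have ix: "inv\<^bsub>W\<^esub> x \<in> carrier W" using G x by (simp add: group.inv_closed)
  have an: "act x n \<in> carrier Lam" using wd x n unfolding weyl_datum_def by blast
  have "\<gamma> (inv\<^bsub>W\<^esub> x \<otimes>\<^bsub>W\<^esub> x) n = \<gamma> (inv\<^bsub>W\<^esub> x) (act x n) * \<gamma> x n"
    using cc ix x n unfolding cocycle_def by blast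
  moreover have "inv\<^bsub>W\<^esub> x \<otimes>\<^bsub>W\<^esub> x = \<one>\<^bsub>W\<^esub>" using G x by (simp add: group.l_inv)
  moreover have "\<gamma> \<one>\<^bsub>W\<^esub> n = 1"
  proof -
    have "\<one>\<^bsub>W\<^esub> \<in> carrier W" using G by (simp add: monoid.one_closed group.is_monoid)
    moreover have "act \<one>\<^bsub>W\<^esub> n = n" using wd n unfolding weyl_datum_def by blast
    ultimately show ?thesis using cc n unfolding cocycle_def by blast
  qed
  ultimately have e: "\<gamma> (inv\<^bsub>W\<^esub> x) (act x n) * \<gamma> x n = 1" by simp
  have a1: "absv 1 = 1"
  proof -
    have "absv 1 = absv 1 * absv 1" using av unfolding absolute_value_def by (metis mult_1)
    moreover have "absv 1 \<noteq> 0" using av unfolding absolute_value_def by simp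
    ultimately show ?thesis by simp
  qed
  have "absv (\<gamma> (inv\<^bsub>W\<^esub> x) (act x n)) * absv (\<gamma> x n) = 1"
  proof -
    have "\<forall>x y. absv (x * y) = absv x * absv y" using av unfolding absolute_value_def by blast
    then have "absv (\<gamma> (inv\<^bsub>W\<^esub> x) (act x n) * \<gamma> x n) = absv (\<gamma> (inv\<^bsub>W\<^esub> x) (act x n)) * absv (\<gamma> x n)" by blast
    then show ?thesis using e a1 by simp
  qed
  moreover have "absv (\<gamma> (inv\<^bsub>W\<^esub> x) (act x n)) \<le> 1" using cc ix d unfolding cocycle_def by blast
  moreover have "absv (\<gamma> (inv\<^bsub>W\<^esub> x) (act x n)) \<ge> 0" "absv (\<gamma> x n) \<ge> 0"
    using av unfolding absolute_value_def by auto
  ultimately show ?thesis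
    by (metis mult_left_le mult.commute linorder_not_le less_eq_real_def mult_le_one)
qed

lemma dom_spec:
  assumes wd: "weyl_datum W Lam act Ldd" and l: "l \<in> carrier Lam"
  shows "(SOME w. w \<in> carrier W \<and> act w l \<in> Ldd) \<in> carrier W \<and>
         act (SOME w. w \<in> carrier W \<and> act w l \<in> Ldd) l \<in> Ldd"
proof -
  have "\<exists>w. w \<in> carrier W \<and> act w l \<in> Ldd" using wd l unfolding weyl_datum_def by blast
  then show ?thesis by (rule someI_ex)
qed

lemma le_dom:
  assumes wd: "weyl_datum W Lam act Ldd" and av: "absolute_value absv"
    and cc: "cocycle W Lam act Ldd absv \<gamma>"
    and u: "u \<in> carrier W" and l: "l \<in> carrier Lam"
  shows "absv (\<gamma> u l) \<le> absv (gamma_dom W act Ldd \<gamma> l)"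
proof -
  define v where "v = (SOME w. w \<in> carrier W \<and> act w l \<in> Ldd)"
  have v: "v \<in> carrier W" "act v l \<in> Ldd" using dom_spec[OF wd l] v_def by auto
  have G: "group W" using wd unfolding weyl_datum_def by blast
  have iu: "inv\<^bsub>W\<^esub> u \<in> carrier W" using G u by (simp add: group.inv_closed)
  have y: "v \<otimes>\<^bsub>W\<^esub> inv\<^bsub>W\<^esub> u \<in> carrier W" using G v iu by (simp add: group.subgroup_self subgroup.m_closed)
  have vy: "(v \<otimes>\<^bsub>W\<^esub> inv\<^bsub>W\<^esub> u) \<otimes>\<^bsub>W\<^esub> u = v"
    proof -
    have "(v \<otimes>\<^bsub>W\<^esub> inv\<^bsub>W\<^esub> u) \<otimes>\<^bsub>W\<^esub> u = v \<otimes>\<^bsub>W\<^esub> (inv\<^bsub>W\<^esub> u \<otimes>\<^bsub>W\<^esub> u)"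
      by (rule monoid.m_assoc[OF group.is_monoid[OF G] v(1) iu u])
    also have "\<dots> = v" using group.l_inv[OF G u] monoid.r_one[OF group.is_monoid[OF G] v(1)] by simp
    finally show ?thesis .
  qed
  have al: "act u l \<in> carrier Lam" using wd u l unfolding weyl_datum_def by blast
  have "act (v \<otimes>\<^bsub>W\<^esub> inv\<^bsub>W\<^esub> u) (act u l) = act ((v \<otimes>\<^bsub>W\<^esub> inv\<^bsub>W\<^esub> u) \<otimes>\<^bsub>W\<^esub> u) l"
  proof -
    have "\<forall>v\<in>carrier W. \<forall>w\<in>carrier W. \<forall>l\<in>carrier Lam.
         act (v \<otimes>\<^bsub>W\<^esub> w) l = act v (act w l)" using wd unfolding weyl_datum_def by blast
    then have "act ((v \<otimes>\<^bsub>W\<^esub> inv\<^bsub>W\<^esub> u) \<otimes>\<^bsub>W\<^esub> u) l = act (v \<otimes>\<^bsub>W\<^esub> inv\<^bsub>W\<^esub> u) (act u l)"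
      using y u l by blast
    then show ?thesis by (rule sym)
  qed
  then have dd: "act (v \<otimes>\<^bsub>W\<^esub> inv\<^bsub>W\<^esub> u) (act u l) \<in> Ldd" using vy v by simp
  have ge: "absv (\<gamma> (v \<otimes>\<^bsub>W\<^esub> inv\<^bsub>W\<^esub> u) (act u l)) \<ge> 1"
    by (rule key_ge1[OF wd av cc y al dd])
  have "\<gamma> v l = \<gamma> (v \<otimes>\<^bsub>W\<^esub> inv\<^bsub>W\<^esub> u) (act u l) * \<gamma> u l"
  proof -
    have "\<forall>v\<in>carrier W. \<forall>w\<in>carrier W. \<forall>l\<in>carrier Lam.
         \<gamma> (v \<otimes>\<^bsub>W\<^esub> w) l = \<gamma> v (act w l) * \<gamma> w l" using cc unfolding cocycle_def by blast
    then have "\<gamma> ((v \<otimes>\<^bsub>W\<^esub> inv\<^bsub>W\<^esub> u) \<otimes>\<^bsub>W\<^esub> u) l = \<gamma> (v \<otimes>\<^bsub>W\<^esub> inv\<^bsub>W\<^esub> u) (act u l) * \<gamma> u l"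
      using y u l by blast
    then show ?thesis unfolding vy .
  qed
  moreover have "\<forall>x y. absv (x * y) = absv x * absv y" using av unfolding absolute_value_def by blast
  ultimately have "absv (\<gamma> v l) = absv (\<gamma> (v \<otimes>\<^bsub>W\<^esub> inv\<^bsub>W\<^esub> u) (act u l)) * absv (\<gamma> u l)"
    by simp
  moreover have "absv (\<gamma> u l) \<ge> 0" using av unfolding absolute_value_def by auto
  ultimately have "absv (\<gamma> u l) \<le> absv (\<gamma> v l)" using ge
    using mult_right_mono[OF ge, of "absv (\<gamma> u l)"] by simp
  then show ?thesis unfolding gamma_dom_def v_def .
qed

theorem lemma2p1:
  fixes W :: "('w, 'a) monoid_scheme" and Lam :: "('l, 'b) monoid_scheme"
    and act :: "'w \<Rightarrow> 'l \<Rightarrow> 'l" and Ldd :: "'l set"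
    and absv :: "'k::field \<Rightarrow> real" and \<gamma> :: "'w \<Rightarrow> 'l \<Rightarrow> 'k"
  assumes "weyl_datum W Lam act Ldd"
    and "absolute_value absv"
    and "cocycle W Lam act Ldd absv \<gamma>"
  shows "(\<forall>l\<in>carrier Lam. absv (gamma_dom W act Ldd \<gamma> l) \<ge> 1) \<and>
         (\<forall>l\<in>carrier Lam. \<forall>m\<in>carrier Lam.
            absv (gamma_dom W act Ldd \<gamma> (l \<otimes>\<^bsub>Lam\<^esub> m))
              \<le> absv (gamma_dom W act Ldd \<gamma> l) * absv (gamma_dom W act Ldd \<gamma> m))"
proof (intro conjI ballI)
  fix l assume l: "l \<in> carrier Lam"
  show "absv (gamma_dom W act Ldd \<gamma> l) \<ge> 1"
    unfolding gamma_dom_def using key_ge1[OF assms _ l] dom_spec[OF assms(1) l] by blast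
next
  fix l m assume l: "l \<in> carrier Lam" and m: "m \<in> carrier Lam"
  have C: "comm_group Lam" using assms(1) unfolding weyl_datum_def by blast
  have lm: "l \<otimes>\<^bsub>Lam\<^esub> m \<in> carrier Lam" using C l m
    by (simp add: comm_group.axioms(1) monoid.m_closed comm_monoid.axioms(1))
  define u where "u = (SOME w. w \<in> carrier W \<and> act w (l \<otimes>\<^bsub>Lam\<^esub> m) \<in> Ldd)"
  have u: "u \<in> carrier W" using dom_spec[OF assms(1) lm] u_def by auto
  have "gamma_dom W act Ldd \<gamma> (l \<otimes>\<^bsub>Lam\<^esub> m) = \<gamma> u l * \<gamma> u m"
    unfolding gamma_dom_def u_def[symmetric] using assms(3) u l m unfolding cocycle_def by blast
  moreover have "\<forall>x y. absv (x * y) = absv x * absv y" using assms(2) unfolding absolute_value_def by blast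
  ultimately have "absv (gamma_dom W act Ldd \<gamma> (l \<otimes>\<^bsub>Lam\<^esub> m)) = absv (\<gamma> u l) * absv (\<gamma> u m)"
    by simp
  moreover have "absv (\<gamma> u l) \<le> absv (gamma_dom W act Ldd \<gamma> l)" by (rule le_dom[OF assms u l])
  moreover have "absv (\<gamma> u m) \<le> absv (gamma_dom W act Ldd \<gamma> m)" by (rule le_dom[OF assms u m])
  moreover have "absv (\<gamma> u l) \<ge> 0" "absv (\<gamma> u m) \<ge> 0"
    using assms(2) unfolding absolute_value_def by auto
  ultimately show "absv (gamma_dom W act Ldd \<gamma> (l \<otimes>\<^bsub>Lam\<^esub> m))
              \<le> absv (gamma_dom W act Ldd \<gamma> l) * absv (gamma_dom W act Ldd \<gamma> m)"
    by (simp add: mult_mono')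
qed

end
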